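(* Every semifilter $\mathcal{S}$ (viewed as a subspace of $2^\omega$) is homogeneous.
   Context: A semifilter (on $\omega$) is a collection $\mathcal{S}\subseteq\mathcal{P}(\omega)$ such that $\varnothing\notin\mathcal{S}$, $\omega\in\mathcal{S}$, $\mathcal{S}$ is closed under finite modifications (if $x\in\mathcal{S}$ and $y\subseteq\omega$ with $(x\setminus y)\cup(y\setminus x)$ finite then $y\in\mathcal{S}$), and $\mathcal{S}$ is upward-closed. Subsets of $\mathcal{P}(\omega)$ are identified via characteristic functions with subspaces of $2^\omega$. A space $X$ is homogeneous if for all $x,y\in X$ there is a homeomorphism $h:X\to X$ with $h(x)=y$. *)

theory Defs
  imports "HOL-Analysis.Analysis"
begin

definition semifilter :: "nat set set \<Rightarrow> bool" where
  "semifilter S \<longleftrightarrow>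
     {} \<notin> S \<and> UNIV \<in> S \<and>
     (\<forall>x\<in>S. \<forall>y. finite ((x - y) \<union> (y - x)) \<longrightarrow> y \<in> S) \<and>
     (\<forall>x\<in>S. \<forall>y. x \<subseteq> y \<longrightarrow> y \<in> S)"

text \<open>Characteristic function: identifies P(omega) with 2^omega = nat => bool,
  which carries the product topology of discrete bool.\<close>
definition char_fun :: "nat set \<Rightarrow> (nat \<Rightarrow> bool)" where
  "char_fun A = (\<lambda>n. n \<in> A)"

definition homogeneous :: "'a::topological_space set \<Rightarrow> bool" where
  "homogeneous X \<longleftrightarrow> (\<forall>x\<in>X. \<forall>y\<in>X. \<exists>h k. homeomorphism X X h k \<and> h x = y)"

end

theory Submission
  imports Defs
begin

definition flipmap :: "(nat \<Rightarrow> bool) \<Rightarrow> (nat \<Rightarrow> bool) \<Rightarrow> (nat \<Rightarrow> bool) \<Rightarrow> (nat \<Rightarrow> bool)" where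
  "flipmap p q z = (\<lambda>k. z k \<noteq> ((p k \<noteq> q k) \<and> (\<forall>j<k. z j = p j)))"

lemma flipmap_prefix:
  "(\<forall>j<k. flipmap p q z j = q j) \<longleftrightarrow> (\<forall>j<k. z j = p j)"
proof (induction k)
  case 0 then show ?case by simp
next
  case (Suc k)
  have e: "flipmap p q z k = (z k \<noteq> ((p k \<noteq> q k) \<and> (\<forall>j<k. z j = p j)))"
    by (simp only: flipmap_def)
  show ?case
  proof
    assume a: "\<forall>j<Suc k. flipmap p q z j = q j"
    then have H: "\<forall>j<k. z j = p j" using Suc.IH by (simp add: All_less_Suc)
    have "flipmap p q z k = q k" using a by simp
    then have "z k = p k" using e H by blast
    then show "\<forall>j<Suc k. z j = p j" using H by (simp add: All_less_Suc)
  next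
    assume a: "\<forall>j<Suc k. z j = p j"
    then have H: "\<forall>j<k. z j = p j" "z k = p k" by (simp_all add: All_less_Suc)
    then have "flipmap p q z k = q k" using e by blast
    then show "\<forall>j<Suc k. flipmap p q z j = q j" using H Suc.IH by (simp add: All_less_Suc)
  qed
qed

lemma bool_aux: "(B::bool) = A \<Longrightarrow> X = (W \<noteq> (c' \<and> B)) \<Longrightarrow> W = (Z \<noteq> (c \<and> A)) \<Longrightarrow> c' = c \<Longrightarrow> X = Z"
  by auto

lemma flipmap_inv: "flipmap q p (flipmap p q z) = z"
proof
  fix k
  have "(\<forall>j<k. flipmap p q z j = q j) \<longleftrightarrow> (\<forall>j<k. z j = p j)" by (rule flipmap_prefix)
  moreover have "flipmap q p (flipmap p q z) k = (flipmap p q z k \<noteq> ((q k \<noteq> p k) \<and> (\<forall>j<k. flipmap p q z j = q j)))"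
    by (simp only: flipmap_def)
  moreover have "flipmap p q z k = (z k \<noteq> ((p k \<noteq> q k) \<and> (\<forall>j<k. z j = p j)))"
    by (simp only: flipmap_def)
  moreover have "(q k \<noteq> p k) = (p k \<noteq> q k)" by blast
  ultimately show "flipmap q p (flipmap p q z) k = z k" by (rule bool_aux)
qed

lemma flipmap_self: "flipmap p q p = q"
  by (auto simp: flipmap_def)

lemma flipmap_maps:
  assumes S: "semifilter S" and p: "p \<in> char_fun ` S" and q: "q \<in> char_fun ` S"
    and z: "z \<in> char_fun ` S"
  shows "flipmap p q z \<in> char_fun ` S"
proof (cases "z = p")
  case True then show ?thesis using q by (simp add: flipmap_self)
next
  case False
  then obtain n where n: "z n \<noteq> p n" by auto
  obtain a where a: "a \<in> S" "z = char_fun a" using z by auto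
  define b where "b = {k. flipmap p q z k}"
  have cb: "char_fun b = flipmap p q z" by (auto simp: char_fun_def b_def)
  have "(a - b) \<union> (b - a) \<subseteq> {..n}"
  proof
    fix k assume k: "k \<in> (a - b) \<union> (b - a)"
    show "k \<in> {..n}"
    proof (rule ccontr)
      assume "k \<notin> {..n}"
      then have "n < k" by auto
      then have "flipmap p q z k = z k" using n by (auto simp: flipmap_def)
      then show False using k a(2) by (auto simp: b_def char_fun_def)
    qed
  qed
  then have "finite ((a - b) \<union> (b - a))" by (rule finite_subset) simp
  then have "b \<in> S" using S a(1) unfolding semifilter_def by blast
  then show ?thesis using cb by (metis image_eqI)
qed

lemma finite_dep_cont:
  fixes g :: "(nat \<Rightarrow> bool) \<Rightarrow> bool"
  assumes dep: "\<And>z w. (\<forall>j<N. z j = w j) \<Longrightarrow> g z = g w"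
  shows "continuous_on UNIV g"
proof -
  have opn: "open {w. \<forall>j<N. w j = z j}" for z :: "nat \<Rightarrow> bool"
  proof -
    have "{w. \<forall>j<N. w j = z j} = (\<Inter>j\<in>{..<N}. (\<lambda>w. w j) -` {z j})" by auto
    moreover have "open ((\<lambda>w::nat\<Rightarrow>bool. w j) -` {z j})" for j
      by (rule open_vimage) (auto simp: open_discrete)
    ultimately show ?thesis by (auto intro: open_INT)
  qed
  show ?thesis
  proof (subst continuous_on_open_vimage, simp, intro allI impI)
    fix B :: "bool set" assume "open B"
    have eq: "g -` B \<inter> UNIV = (\<Union>z\<in>g -` B. {w. \<forall>j<N. w j = z j})"
    proof
      show "g -` B \<inter> UNIV \<subseteq> (\<Union>z\<in>g -` B. {w. \<forall>j<N. w j = z j})" by auto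
      show "(\<Union>z\<in>g -` B. {w. \<forall>j<N. w j = z j}) \<subseteq> g -` B \<inter> UNIV"
      proof
        fix w assume "w \<in> (\<Union>z\<in>g -` B. {w. \<forall>j<N. w j = z j})"
        then obtain z where "g z \<in> B" "\<forall>j<N. w j = z j" by auto
        then show "w \<in> g -` B \<inter> UNIV" using dep[of w z] by simp
      qed
    qed
    have "open (\<Union>z\<in>g -` B. {w. \<forall>j<N. w j = z j})" using opn by (intro open_UN) auto
    then show "open (g -` B \<inter> UNIV)" by (simp only: eq)
  qed
qed

lemma flipmap_cont: "continuous_on UNIV (flipmap p q)"
proof (rule continuous_on_coordinatewise_then_product)
  fix k
  show "continuous_on UNIV (\<lambda>z. flipmap p q z k)"
    by (rule finite_dep_cont[where N="Suc k"]) (auto simp: flipmap_def)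
qed

theorem corollary4p3:
  fixes S :: "nat set set"
  assumes "semifilter S"
  shows "homogeneous (char_fun ` S)"
  unfolding homogeneous_def
proof (intro ballI)
  fix p q assume p: "p \<in> char_fun ` S" and q: "q \<in> char_fun ` S"
  let ?X = "char_fun ` S"
  have m1: "flipmap p q ` ?X \<subseteq> ?X" using flipmap_maps[OF assms p q] by auto
  have m2: "flipmap q p ` ?X \<subseteq> ?X" using flipmap_maps[OF assms q p] by auto
  have "homeomorphism ?X ?X (flipmap p q) (flipmap q p)"
    unfolding homeomorphism_def
  proof (intro conjI ballI)
    show "flipmap p q ` ?X = ?X"
    proof
      show "?X \<subseteq> flipmap p q ` ?X"
      proof
        fix z assume "z \<in> ?X"
        then have "flipmap q p z \<in> ?X" using m2 by blast
        moreover have "flipmap p q (flipmap q p z) = z" by (rule flipmap_inv)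
        ultimately show "z \<in> flipmap p q ` ?X" by (metis image_eqI)
      qed
    qed (rule m1)
    show "flipmap q p ` ?X = ?X"
    proof
      show "?X \<subseteq> flipmap q p ` ?X"
      proof
        fix z assume "z \<in> ?X"
        then have "flipmap p q z \<in> ?X" using m1 by blast
        moreover have "flipmap q p (flipmap p q z) = z" by (rule flipmap_inv)
        ultimately show "z \<in> flipmap q p ` ?X" by (metis image_eqI)
      qed
    qed (rule m2)
    show "continuous_on ?X (flipmap p q)" by (rule continuous_on_subset[OF flipmap_cont]) simp
    show "continuous_on ?X (flipmap q p)" by (rule continuous_on_subset[OF flipmap_cont]) simp
  qed (simp_all add: flipmap_inv)
  then show "\<exists>h k. homeomorphism ?X ?X h k \<and> h p = q" using flipmap_self by blast
qed

end
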